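(* Let $F$ be the free group on the totally ordered set $X=\{x_1<\dots<x_m\}$, and let $n\ge1$, $c\ge1$ with $c\ge n-1$. Let $Y$ be the set of all basic commutators on $X$ of weights $c+1,\dots,c+n$ and $Z=\{[b,a]: a,b\in Y,\ b>a\}$. Then $$\gamma_2(\gamma_{c+1}(F))=\langle Z\rangle\,[\gamma_{c+n+1}(F),\gamma_{c+1}(F)],$$ i.e. $\gamma_2(\gamma_{c+1}(F))\equiv\langle Z\rangle \pmod{[\gamma_{c+n+1}(F),\gamma_{c+1}(F)]}$.
   Context: $\gamma_k(F)$ is the $k$-th term of the lower central series of $F$, and $\gamma_2(H)=[H,H]$. Basic commutators on a totally ordered set $X$ of free generators are defined inductively with their weights $wt$: the elements of $X$ are the basic commutators of weight 1, ordered as in $X$. Assuming basic commutators of weight $<k$ have been defined and ordered, a commutator $[b,a]$ is a basic commutator of weight $k$ if $b,a$ are basic commutators with $wt(a)+wt(b)=k$, $b>a$, and, if $b=[b_1,b_2]$ (with $b_1,b_2$ basic), then $b_2\le a$. The ordering is then extended to weight $k$ so that all basic commutators of smaller weight precede those of weight $k$. The order on $Y$ is the one inherited from this ordering. *)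

theory Defs
  imports "HOL-Algebra.Algebra"
begin

definition grp_comm :: "('a, 'b) monoid_scheme \<Rightarrow> 'a \<Rightarrow> 'a \<Rightarrow> 'a" where
  "grp_comm G g h = inv\<^bsub>G\<^esub> g \<otimes>\<^bsub>G\<^esub> inv\<^bsub>G\<^esub> h \<otimes>\<^bsub>G\<^esub> g \<otimes>\<^bsub>G\<^esub> h"

definition comm_subgroup :: "('a, 'b) monoid_scheme \<Rightarrow> 'a set \<Rightarrow> 'a set \<Rightarrow> 'a set" where
  "comm_subgroup G H K = generate G {grp_comm G h k | h k. h \<in> H \<and> k \<in> K}"

fun lcs :: "('a, 'b) monoid_scheme \<Rightarrow> nat \<Rightarrow> 'a set" where
  "lcs G 0 = carrier G"
| "lcs G (Suc 0) = carrier G"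
| "lcs G (Suc (Suc k)) = comm_subgroup G (lcs G (Suc k)) (carrier G)"

text \<open>Words over the generators: letter (i, True) is x_i, (i, False) is x_i^-1.\<close>
fun word_eval :: "('a, 'b) monoid_scheme \<Rightarrow> (nat \<Rightarrow> 'a) \<Rightarrow> (nat \<times> bool) list \<Rightarrow> 'a" where
  "word_eval G x [] = \<one>\<^bsub>G\<^esub>"
| "word_eval G x ((i, e) # w) =
     (if e then x i else inv\<^bsub>G\<^esub> (x i)) \<otimes>\<^bsub>G\<^esub> word_eval G x w"

fun reduced_word :: "(nat \<times> bool) list \<Rightarrow> bool" where
  "reduced_word ((i, e) # (j, f) # w) =
     (\<not> (i = j \<and> e \<noteq> f) \<and> reduced_word ((j, f) # w))"
| "reduced_word _ = True"

definition free_on :: "('a, 'b) monoid_scheme \<Rightarrow> nat \<Rightarrow> (nat \<Rightarrow> 'a) \<Rightarrow> bool" where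
  "free_on G m x \<longleftrightarrow>
     x ` {..<m} \<subseteq> carrier G \<and>
     generate G (x ` {..<m}) = carrier G \<and>
     (\<forall>w. w \<noteq> [] \<and> fst ` set w \<subseteq> {..<m} \<and> reduced_word w \<longrightarrow> word_eval G x w \<noteq> \<one>\<^bsub>G\<^esub>)"

text \<open>Formal commutators: Br b a stands for [b,a].\<close>
datatype fcomm = Gen nat | Br fcomm fcomm

fun wt :: "fcomm \<Rightarrow> nat" where
  "wt (Gen i) = 1"
| "wt (Br b a) = wt b + wt a"

fun feval :: "('a, 'b) monoid_scheme \<Rightarrow> (nat \<Rightarrow> 'a) \<Rightarrow> fcomm \<Rightarrow> 'a" where
  "feval G x (Gen i) = x i"
| "feval G x (Br b a) = grp_comm G (feval G x b) (feval G x a)"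

text \<open>Basic commutators on X = {x_0,...,x_(m-1)} w.r.t. a strict order r on formal
  commutators ((a,b) \<in> r means a < b).\<close>
fun basic :: "(fcomm \<times> fcomm) set \<Rightarrow> nat \<Rightarrow> fcomm \<Rightarrow> bool" where
  "basic r m (Gen i) = (i < m)"
| "basic r m (Br b a) =
     (basic r m b \<and> basic r m a \<and> (a, b) \<in> r \<and>
      (case b of Gen _ \<Rightarrow> True | Br b1 b2 \<Rightarrow> b2 = a \<or> (b2, a) \<in> r))"

definition admissible_order :: "(fcomm \<times> fcomm) set \<Rightarrow> bool" where
  "admissible_order r \<longleftrightarrow>
     strict_linear_order_on UNIV r \<and>
     (\<forall>i j. (Gen i, Gen j) \<in> r \<longleftrightarrow> i < j) \<and>
     (\<forall>s t. wt s < wt t \<longrightarrow> (s, t) \<in> r)"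

end

theory Submission
  imports Defs
begin



context group begin

lemma cancel1 [simp]: "x \<in> carrier G \<Longrightarrow> y \<in> carrier G \<Longrightarrow> x \<otimes> (inv x \<otimes> y) = y"
  by (metis inv_closed l_one m_assoc r_inv)
lemma cancel2 [simp]: "x \<in> carrier G \<Longrightarrow> y \<in> carrier G \<Longrightarrow> inv x \<otimes> (x \<otimes> y) = y"
  by (metis inv_closed l_one m_assoc l_inv)

lemmas gsimps = grp_comm_def m_assoc inv_mult_group

lemma comm_closed [simp]: "g \<in> carrier G \<Longrightarrow> h \<in> carrier G \<Longrightarrow> grp_comm G g h \<in> carrier G"
  by (simp add: grp_comm_def)

lemma hall_witt:
  assumes "x \<in> carrier G" "y \<in> carrier G" "z \<in> carrier G"
  shows "(inv y \<otimes> grp_comm G (grp_comm G x (inv y)) z \<otimes> y) \<otimes>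
         (inv z \<otimes> grp_comm G (grp_comm G y (inv z)) x \<otimes> z) \<otimes>
         (inv x \<otimes> grp_comm G (grp_comm G z (inv x)) y \<otimes> x) = \<one>"
  using assms by (simp add: gsimps)

lemma comm_inv: "g \<in> carrier G \<Longrightarrow> h \<in> carrier G \<Longrightarrow> inv (grp_comm G g h) = grp_comm G h g"
  by (simp add: gsimps)

lemma comm_mult_left: "g1 \<in> carrier G \<Longrightarrow> g2 \<in> carrier G \<Longrightarrow> h \<in> carrier G \<Longrightarrow>
  grp_comm G (g1 \<otimes> g2) h = (inv g2 \<otimes> grp_comm G g1 h \<otimes> g2) \<otimes> grp_comm G g2 h"
  by (simp add: gsimps)

lemma comm_inv_left: "g \<in> carrier G \<Longrightarrow> h \<in> carrier G \<Longrightarrow>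
  grp_comm G (inv g) h = inv (inv g) \<otimes> inv (grp_comm G g h) \<otimes> inv g"
  by (simp add: gsimps)

lemma comm_mult_right: "g \<in> carrier G \<Longrightarrow> h1 \<in> carrier G \<Longrightarrow> h2 \<in> carrier G \<Longrightarrow>
  grp_comm G g (h1 \<otimes> h2) = grp_comm G g h2 \<otimes> (inv h2 \<otimes> grp_comm G g h1 \<otimes> h2)"
  by (simp add: gsimps)

lemma comm_inv_right: "g \<in> carrier G \<Longrightarrow> h \<in> carrier G \<Longrightarrow>
  grp_comm G g (inv h) = inv (inv h) \<otimes> inv (grp_comm G g h) \<otimes> inv h"
  by (simp add: gsimps)

lemma comm_one_left: "h \<in> carrier G \<Longrightarrow> grp_comm G \<one> h = \<one>"
  by (simp add: gsimps)
lemma comm_one_right: "h \<in> carrier G \<Longrightarrow> grp_comm G h \<one> = \<one>"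
  by (simp add: gsimps)
lemma comm_self: "h \<in> carrier G \<Longrightarrow> grp_comm G h h = \<one>"
  by (simp add: gsimps)
lemma conj_comm: "g \<in> carrier G \<Longrightarrow> h \<in> carrier G \<Longrightarrow> inv h \<otimes> g \<otimes> h = g \<otimes> grp_comm G g h"
  by (simp add: gsimps)
end



context group begin

lemma comm_gen_left:
  assumes R: "subgroup R G" and C: "subgroup C G" and SC: "S \<subseteq> C" and h: "h \<in> carrier G"
    and conj: "\<And>c a. c \<in> C \<Longrightarrow> a \<in> R \<Longrightarrow> inv c \<otimes> a \<otimes> c \<in> R"
    and base: "\<And>s. s \<in> S \<Longrightarrow> grp_comm G s h \<in> R"
    and g: "g \<in> generate G S"
  shows "grp_comm G g h \<in> R"
proof -
  have gC: "generate G S \<subseteq> C" using generate_subgroup_incl[OF SC C] .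
  have Sc: "S \<subseteq> carrier G" using SC subgroup.subset[OF C] by blast
  from g show ?thesis
  proof (induction rule: generate.induct)
    case one then show ?case using h comm_one_left subgroup.one_closed[OF R] by simp
  next
    case (incl s) then show ?case by (rule base)
  next
    case (inv s)
    have sc: "s \<in> carrier G" using inv Sc by blast
    have "inv s \<in> C" using inv SC subgroup.m_inv_closed[OF C] by blast
    moreover have "inv (grp_comm G s h) \<in> R" using base[OF inv] subgroup.m_inv_closed[OF R] by blast
    ultimately show ?case using conj[of "inv s"] comm_inv_left[OF sc h] sc by simp
  next
    case (eng g1 g2)
    have c: "g1 \<in> carrier G" "g2 \<in> carrier G" using eng(1,2) generate_in_carrier[OF Sc] by auto
    have "g2 \<in> C" using eng gC by blast
    then show ?case using comm_mult_left[OF c h] conj eng subgroup.m_closed[OF R] by simp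
  qed
qed

lemma comm_gen_right:
  assumes R: "subgroup R G" and C: "subgroup C G" and SC: "S \<subseteq> C" and g: "g \<in> carrier G"
    and conj: "\<And>c a. c \<in> C \<Longrightarrow> a \<in> R \<Longrightarrow> inv c \<otimes> a \<otimes> c \<in> R"
    and base: "\<And>s. s \<in> S \<Longrightarrow> grp_comm G g s \<in> R"
    and h: "h \<in> generate G S"
  shows "grp_comm G g h \<in> R"
proof -
  have gC: "generate G S \<subseteq> C" using generate_subgroup_incl[OF SC C] .
  have Sc: "S \<subseteq> carrier G" using SC subgroup.subset[OF C] by blast
  from h show ?thesis
  proof (induction rule: generate.induct)
    case one then show ?case using g comm_one_right subgroup.one_closed[OF R] by simp
  next
    case (incl s) then show ?case by (rule base)
  next
    case (inv s)
    have sc: "s \<in> carrier G" using inv Sc by blast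
    have "inv s \<in> C" using inv SC subgroup.m_inv_closed[OF C] by blast
    moreover have "inv (grp_comm G g s) \<in> R" using base[OF inv] subgroup.m_inv_closed[OF R] by blast
    ultimately show ?case using conj[of "inv s"] comm_inv_right[OF g sc] sc by simp
  next
    case (eng g1 g2)
    have c: "g1 \<in> carrier G" "g2 \<in> carrier G" using eng(1,2) generate_in_carrier[OF Sc] by auto
    have "g2 \<in> C" using eng gC by blast
    then show ?case using comm_mult_right[OF g c] conj eng subgroup.m_closed[OF R] by simp
  qed
qed

lemma normal_conj: "R \<lhd> G \<Longrightarrow> c \<in> carrier G \<Longrightarrow> a \<in> R \<Longrightarrow> inv c \<otimes> a \<otimes> c \<in> R"
  using normal_inv_iff[of R] by (metis inv_closed inv_inv)

lemma carrier_subgroup: "subgroup (carrier G) G"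
  by (simp add: subgroup_self)

lemma comm_gen_left_n:
  assumes "R \<lhd> G" "S \<subseteq> carrier G" "h \<in> carrier G" "\<And>s. s \<in> S \<Longrightarrow> grp_comm G s h \<in> R"
    "g \<in> generate G S"
  shows "grp_comm G g h \<in> R"
  using comm_gen_left[OF normal_imp_subgroup[OF assms(1)] subgroup_self assms(2,3) _ assms(4,5)]
    normal_conj[OF assms(1)] by blast

lemma comm_gen_right_n:
  assumes "R \<lhd> G" "S \<subseteq> carrier G" "g \<in> carrier G" "\<And>s. s \<in> S \<Longrightarrow> grp_comm G g s \<in> R"
    "h \<in> generate G S"
  shows "grp_comm G g h \<in> R"
  using comm_gen_right[OF normal_imp_subgroup[OF assms(1)] subgroup_self assms(2,3) _ assms(4,5)]
    normal_conj[OF assms(1)] by blast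

lemma hw_normal:
  assumes N: "R \<lhd> G" and c: "x \<in> carrier G" "y \<in> carrier G" "z \<in> carrier G"
    and B: "grp_comm G (grp_comm G y (inv z)) x \<in> R"
    and Cc: "grp_comm G (grp_comm G z (inv x)) y \<in> R"
  shows "grp_comm G (grp_comm G x (inv y)) z \<in> R"
proof -
  note sg = normal_imp_subgroup[OF N]
  let ?A = "grp_comm G (grp_comm G x (inv y)) z"
  let ?B = "grp_comm G (grp_comm G y (inv z)) x"
  let ?C = "grp_comm G (grp_comm G z (inv x)) y"
  have Ac: "?A \<in> carrier G" using c by simp
  have b: "inv z \<otimes> ?B \<otimes> z \<in> R" "inv x \<otimes> ?C \<otimes> x \<in> R" using normal_conj[OF N] B Cc c by auto
  then have bc: "(inv z \<otimes> ?B \<otimes> z) \<otimes> (inv x \<otimes> ?C \<otimes> x) \<in> R" using subgroup.m_closed[OF sg] by blast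
  have bcc: "(inv z \<otimes> ?B \<otimes> z) \<otimes> (inv x \<otimes> ?C \<otimes> x) \<in> carrier G" using c by simp
  have hw: "(inv y \<otimes> ?A \<otimes> y) \<otimes> ((inv z \<otimes> ?B \<otimes> z) \<otimes> (inv x \<otimes> ?C \<otimes> x)) = \<one>"
    using hall_witt[OF c] c by (simp add: m_assoc)
  have "inv y \<otimes> ?A \<otimes> y = inv ((inv z \<otimes> ?B \<otimes> z) \<otimes> (inv x \<otimes> ?C \<otimes> x))"
    using hw bcc c Ac by (metis inv_equality inv_comm m_closed inv_closed inv_inv)
  then have "inv y \<otimes> ?A \<otimes> y \<in> R" using bc subgroup.m_inv_closed[OF sg] by simp
  then have "inv (inv y) \<otimes> (inv y \<otimes> ?A \<otimes> y) \<otimes> inv y \<in> R" using normal_conj[OF N, of "inv y"] c by simp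
  then show ?thesis using c Ac by (simp add: m_assoc)
qed

end



context group begin

lemma comm_subgroup_sub: "H \<subseteq> carrier G \<Longrightarrow> K \<subseteq> carrier G \<Longrightarrow> subgroup (comm_subgroup G H K) G"
  unfolding comm_subgroup_def by (rule generate_is_subgroup) (blast intro: comm_closed)

lemma comm_subgroup_mem: "h \<in> H \<Longrightarrow> k \<in> K \<Longrightarrow> grp_comm G h k \<in> comm_subgroup G H K"
  unfolding comm_subgroup_def by (rule generate.incl) blast

lemma comm_subgroup_le:
  "subgroup M G \<Longrightarrow> (\<And>h k. h \<in> H \<Longrightarrow> k \<in> K \<Longrightarrow> grp_comm G h k \<in> M) \<Longrightarrow> comm_subgroup G H K \<subseteq> M"
  unfolding comm_subgroup_def by (rule generate_subgroup_incl) auto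

lemma conj_comm_dist: "g \<in> carrier G \<Longrightarrow> h \<in> carrier G \<Longrightarrow> k \<in> carrier G \<Longrightarrow>
  g \<otimes> grp_comm G h k \<otimes> inv g = grp_comm G (g \<otimes> h \<otimes> inv g) (g \<otimes> k \<otimes> inv g)"
  by (simp add: gsimps)

lemma comm_subgroup_normal:
  assumes H: "H \<lhd> G" and K: "K \<lhd> G" shows "comm_subgroup G H K \<lhd> G"
  unfolding comm_subgroup_def
proof (rule normal_generateI)
  have Hc: "H \<subseteq> carrier G" "K \<subseteq> carrier G"
    using H K normal_imp_subgroup subgroup.subset by blast+
  then show "{grp_comm G h k |h k. h \<in> H \<and> k \<in> K} \<subseteq> carrier G" by (blast intro: comm_closed)
  fix a g assume a: "a \<in> {grp_comm G h k |h k. h \<in> H \<and> k \<in> K}" and g: "g \<in> carrier G"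
  then obtain h k where hk: "a = grp_comm G h k" "h \<in> H" "k \<in> K" by blast
  have "g \<otimes> h \<otimes> inv g \<in> H" "g \<otimes> k \<otimes> inv g \<in> K"
    using H K hk g normal_inv_iff by blast+
  then show "g \<otimes> a \<otimes> inv g \<in> {grp_comm G h k |h k. h \<in> H \<and> k \<in> K}"
    using conj_comm_dist[OF g, of h k] hk Hc by blast
qed

lemma lcs_Suc: "k \<ge> 1 \<Longrightarrow> lcs G (Suc k) = comm_subgroup G (lcs G k) (carrier G)"
  by (cases k) auto

lemma lcs_normal: "lcs G k \<lhd> G"
proof (induction k)
  case 0 show ?case by (simp add: normal_self)
next
  case (Suc k) then show ?case by (cases k) (auto intro: comm_subgroup_normal normal_self)
qed

lemma lcs_sub: "subgroup (lcs G k) G"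
  using lcs_normal normal_imp_subgroup by blast

lemma lcs_carrier: "lcs G k \<subseteq> carrier G"
  using lcs_sub subgroup.subset by blast

lemma lcs_comm_carrier: "k \<ge> 1 \<Longrightarrow> g \<in> lcs G k \<Longrightarrow> h \<in> carrier G \<Longrightarrow> grp_comm G g h \<in> lcs G (Suc k)"
  using lcs_Suc comm_subgroup_mem by metis

lemma lcs_Suc_sub: "lcs G (Suc k) \<subseteq> lcs G k"
proof (cases "k = 0")
  case True then show ?thesis by simp
next
  case False
  then have k: "k \<ge> 1" by simp
  show ?thesis unfolding lcs_Suc[OF k]
  proof (rule comm_subgroup_le[OF lcs_sub])
    fix h g assume h: "h \<in> lcs G k" and g: "g \<in> carrier G"
    have hc: "h \<in> carrier G" using h lcs_carrier by blast
    have "inv g \<otimes> h \<otimes> g \<in> lcs G k" using normal_conj[OF lcs_normal g h] .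
    moreover have "inv h \<in> lcs G k" using h subgroup.m_inv_closed[OF lcs_sub] by blast
    ultimately have "inv h \<otimes> (inv g \<otimes> h \<otimes> g) \<in> lcs G k" using subgroup.m_closed[OF lcs_sub] by blast
    then show "grp_comm G h g \<in> lcs G k" using hc g by (simp add: gsimps)
  qed
qed

lemma lcs_antimono: "k \<le> l \<Longrightarrow> lcs G l \<subseteq> lcs G k"
proof (induction l)
  case 0 then show ?case by simp
next
  case (Suc l) then show ?case using lcs_Suc_sub
    by (metis le_Suc_eq order_refl order_trans)
qed

lemma lcs_comm:
  assumes "i \<ge> 1" "j \<ge> 1" "g \<in> lcs G i" "h \<in> lcs G j"
  shows "grp_comm G g h \<in> lcs G (i + j)"
  using assms(2,1,3,4)
proof (induction j arbitrary: i g h rule: nat_induct_at_least)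
  case base
  then show ?case using lcs_comm_carrier[of i g h] by simp
next
  case (Suc j)
  have gc: "g \<in> carrier G" using Suc lcs_carrier by blast
  let ?S = "{grp_comm G y z |y z. y \<in> lcs G j \<and> z \<in> carrier G}"
  have hS: "h \<in> generate G ?S" using Suc.prems(3) lcs_Suc[OF Suc.hyps] unfolding comm_subgroup_def by simp
  have Sc: "?S \<subseteq> carrier G" using lcs_carrier by (blast intro: comm_closed)
  have "grp_comm G g h \<in> lcs G (i + j + 1)"
  proof (rule comm_gen_right_n[OF lcs_normal Sc gc _ hS])
    fix s assume "s \<in> ?S"
    then obtain y z where s: "s = grp_comm G y z" "y \<in> lcs G j" "z \<in> carrier G" by blast
    have yc: "y \<in> carrier G" using s lcs_carrier by blast
    have B: "grp_comm G (grp_comm G (inv z) (inv g)) y \<in> lcs G (i + j + 1)"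
    proof -
      have "inv g \<in> lcs G i" using Suc.prems(2) subgroup.m_inv_closed[OF lcs_sub] by blast
      then have "grp_comm G (inv g) (inv z) \<in> lcs G (Suc i)"
        using lcs_comm_carrier Suc.prems(1) s by blast
      then have "grp_comm G (inv z) (inv g) \<in> lcs G (Suc i)"
        using comm_inv[of "inv g" "inv z"] gc s subgroup.m_inv_closed[OF lcs_sub] by fastforce
      then show ?thesis using Suc.IH[of "Suc i" _ y] s by simp
    qed
    have C: "grp_comm G (grp_comm G g (inv y)) (inv z) \<in> lcs G (i + j + 1)"
    proof -
      have "inv y \<in> lcs G j" using s subgroup.m_inv_closed[OF lcs_sub] by blast
      then have "grp_comm G g (inv y) \<in> lcs G (i + j)" using Suc by blast
      then show ?thesis using lcs_comm_carrier[of "i+j"] Suc.prems(1) s by auto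
    qed
    have "grp_comm G (grp_comm G y (inv (inv z))) g \<in> lcs G (i + j + 1)"
      by (rule hw_normal[OF lcs_normal yc _ gc B C]) (use s in simp)
    then have "grp_comm G s g \<in> lcs G (i + j + 1)" using s by simp
    then have "inv (grp_comm G s g) \<in> lcs G (i + j + 1)" using subgroup.m_inv_closed[OF lcs_sub] by blast
    then show "grp_comm G g s \<in> lcs G (i + j + 1)" using comm_inv[of s g] s yc gc by simp
  qed
  then show ?case by simp
qed

end



lemma (in group) gen_normal:
  assumes Sc: "S \<subseteq> carrier G" and cj: "\<And>s g. s \<in> S \<Longrightarrow> g \<in> carrier G \<Longrightarrow> g \<otimes> s \<otimes> inv g \<in> generate G S"
  shows "generate G S \<lhd> G"
proof (rule normal_invI[OF generate_is_subgroup[OF Sc]])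
  fix g h assume g: "g \<in> carrier G" show "h \<in> generate G S \<Longrightarrow> g \<otimes> h \<otimes> (inv g) \<in> generate G S"
  proof (induct h rule: generate.induct)
    case one thus ?case using g generate.one by auto
  next
    case (incl h) show ?case using cj[OF incl g] .
  next
    case (inv h)
    hence h: "h \<in> carrier G" using Sc by auto
    hence "inv (g \<otimes> h \<otimes> (inv g)) = g \<otimes> (inv h) \<otimes> (inv g)"
      using g by (simp add: inv_mult_group m_assoc)
    thus ?case
      using generate_m_inv_closed[OF Sc cj[OF inv g]] by simp
  next
    case (eng h1 h2)
    note in_carrier = eng(1,3)[THEN generate_in_carrier[OF Sc]]
    have "g \<otimes> (h1 \<otimes> h2) \<otimes> inv g = (g \<otimes> h1 \<otimes> inv g) \<otimes> (g \<otimes> h2 \<otimes> inv g)"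
      using in_carrier g by (simp add: m_assoc)
    thus ?case
      using generate.eng[OF eng(2,4)] by simp
  qed
qed

lemma wt_pos: "wt t \<ge> 1"
  by (induction t) auto

locale hall = group +
  fixes x :: "nat \<Rightarrow> 'a" and m :: nat and r :: "(fcomm \<times> fcomm) set"
  assumes xc: "x ` {..<m} \<subseteq> carrier G"
    and gen: "generate G (x ` {..<m}) = carrier G"
    and adm: "admissible_order r"
begin

lemma r_trans: "(a, b) \<in> r \<Longrightarrow> (b, c) \<in> r \<Longrightarrow> (a, c) \<in> r"
  using adm unfolding admissible_order_def strict_linear_order_on_def trans_def by blast
lemma r_irrefl: "(a, a) \<notin> r"
  using adm unfolding admissible_order_def strict_linear_order_on_def irrefl_def by blast
lemma r_total: "a \<noteq> b \<Longrightarrow> (a, b) \<in> r \<or> (b, a) \<in> r"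
  using adm unfolding admissible_order_def strict_linear_order_on_def total_on_def by blast
lemma r_wt: "wt s < wt t \<Longrightarrow> (s, t) \<in> r"
  using adm unfolding admissible_order_def by blast
lemma r_wt_le: assumes "(s, t) \<in> r" shows "wt s \<le> wt t"
proof (rule ccontr)
  assume "\<not> wt s \<le> wt t"
  then have "(t, s) \<in> r" using r_wt by simp
  then show False using assms r_trans r_irrefl by blast
qed

abbreviation fe where "fe \<equiv> feval G x"

lemma fe_lcs: "basic r m t \<Longrightarrow> fe t \<in> lcs G (wt t)"
proof (induction t)
  case (Gen i) then show ?case using xc by auto
next
  case (Br b a) then show ?case using lcs_comm wt_pos by simp
qed

lemma fe_carrier: "basic r m t \<Longrightarrow> fe t \<in> carrier G"
  using fe_lcs lcs_carrier by blast

definition Bs where "Bs W = fe ` {t. basic r m t \<and> wt t = W}"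
definition RR where "RR W = generate G (Bs W \<union> lcs G (Suc W))"

lemma Bs_carrier: "Bs W \<subseteq> carrier G"
  unfolding Bs_def using fe_carrier by blast

lemma Bs_lcs: "Bs W \<subseteq> lcs G W"
  unfolding Bs_def using fe_lcs by blast

lemma RR_S_carrier: "Bs W \<union> lcs G (Suc W) \<subseteq> carrier G"
  using Bs_carrier lcs_carrier by blast

lemma RR_normal: assumes W: "W \<ge> 1" shows "RR W \<lhd> G"
  unfolding RR_def
proof (rule gen_normal[OF RR_S_carrier])
  fix s g assume s: "s \<in> Bs W \<union> lcs G (Suc W)" and g: "g \<in> carrier G"
  show "g \<otimes> s \<otimes> inv g \<in> generate G (Bs W \<union> lcs G (Suc W))"
  proof (cases "s \<in> lcs G (Suc W)")
    case True
    then show ?thesis using normal_inv_iff[of "lcs G (Suc W)"] lcs_normal g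
      by (blast intro: generate.incl)
  next
    case False
    then have sB: "s \<in> Bs W" "s \<in> lcs G W" using s Bs_lcs by auto
    have sc: "s \<in> carrier G" using sB Bs_carrier by blast
    have "grp_comm G s (inv g) \<in> lcs G (Suc W)"
      using lcs_comm_carrier[OF W sB(2)] g by simp
    then have "s \<otimes> grp_comm G s (inv g) \<in> generate G (Bs W \<union> lcs G (Suc W))"
      using sB by (blast intro: generate.incl generate.eng)
    moreover have "g \<otimes> s \<otimes> inv g = s \<otimes> grp_comm G s (inv g)"
      using conj_comm[OF sc, of "inv g"] g by simp
    ultimately show ?thesis by simp
  qed
qed

lemma RR_sub: "W \<ge> 1 \<Longrightarrow> subgroup (RR W) G"
  using RR_normal normal_imp_subgroup by blast

lemma Bs_RR: "Bs W \<subseteq> RR W"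
  unfolding RR_def by (blast intro: generate.incl)
lemma lcs_RR: "lcs G (Suc W) \<subseteq> RR W"
  unfolding RR_def by (blast intro: generate.incl)

lemma finite_basic: "finite {t. basic r m t \<and> wt t \<le> W}"
proof (induction W)
  case 0
  have "{t. basic r m t \<and> wt t \<le> 0} = {}" using wt_pos by (metis (mono_tags, lifting) Collect_empty_eq le_zero_eq not_one_le_zero)
  then show ?case by (metis finite.emptyI)
next
  case (Suc W)
  let ?A = "{t. basic r m t \<and> wt t \<le> W}"
  have "{t. basic r m t \<and> wt t \<le> Suc W} \<subseteq> Gen ` {..<m} \<union> (\<lambda>p. Br (fst p) (snd p)) ` (?A \<times> ?A)"
  proof
    fix t assume t: "t \<in> {t. basic r m t \<and> wt t \<le> Suc W}"
    show "t \<in> Gen ` {..<m} \<union> (\<lambda>p. Br (fst p) (snd p)) ` (?A \<times> ?A)"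
    proof (cases t)
      case (Gen i) then show ?thesis using t by auto
    next
      case (Br b a)
      then have "b \<in> ?A" "a \<in> ?A" using t wt_pos[of a] wt_pos[of b] by auto
      then show ?thesis using Br by (auto intro!: image_eqI[where x="(b,a)"])
    qed
  qed
  moreover have "finite (Gen ` {..<m} \<union> (\<lambda>p. Br (fst p) (snd p)) ` (?A \<times> ?A))"
    using Suc by auto
  ultimately show ?case by (rule finite_subset)
qed

definition cnt where "cnt W v = card {s. basic r m s \<and> wt s < W \<and> (v, s) \<in> r}"

lemma cnt_less:
  assumes "(v, v') \<in> r" "basic r m v'" "wt v' < W"
  shows "cnt W v' < cnt W v"
  unfolding cnt_def
proof (rule psubset_card_mono)
  show "finite {s. basic r m s \<and> wt s < W \<and> (v, s) \<in> r}"
    by (rule finite_subset[OF _ finite_basic[of W]]) auto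
  show "{s. basic r m s \<and> wt s < W \<and> (v', s) \<in> r} \<subset> {s. basic r m s \<and> wt s < W \<and> (v, s) \<in> r}"
    using assms r_trans r_irrefl by blast
qed

end



context hall begin

lemma fe_Bs: "basic r m t \<Longrightarrow> fe t \<in> Bs (wt t)"
  unfolding Bs_def by blast

lemma lcs_comm_RR:
  assumes "i \<ge> 1" "j \<ge> 1" "g \<in> lcs G i" "h \<in> lcs G j" "Suc W = i + j"
  shows "grp_comm G g h \<in> RR W"
  using lcs_comm[OF assms(1-4)] assms(5) lcs_RR by (metis subsetD)

lemma core:
  "\<forall>u v. basic r m u \<and> basic r m v \<and> (v, u) \<in> r \<and> wt u + wt v = W \<longrightarrow>
     grp_comm G (fe u) (fe v) \<in> RR W"
proof (induction W rule: less_induct)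
  case (less W)
  note outer = less
  have "\<forall>u v. basic r m u \<and> basic r m v \<and> (v, u) \<in> r \<and> wt u + wt v = W \<and> cnt W v = k \<longrightarrow>
     grp_comm G (fe u) (fe v) \<in> RR W" for k
  proof (induction k rule: less_induct)
    case (less k)
    show ?case
    proof (intro allI impI)
      fix u v assume H: "basic r m u \<and> basic r m v \<and> (v, u) \<in> r \<and> wt u + wt v = W \<and> cnt W v = k"
      then have bu: "basic r m u" and bv: "basic r m v" and vu: "(v, u) \<in> r" and Wd: "wt u + wt v = W"
        and kd: "cnt W v = k" by auto
      have W1: "W \<ge> 1" using Wd wt_pos[of u] by simp
      note RRn = RR_normal[OF W1]
      have inner: "grp_comm G (fe u') (fe v') \<in> RR W"
        if "basic r m u'" "basic r m v'" "(v', u') \<in> r" "wt u' + wt v' = W" "(v, v') \<in> r" for u' v'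
      proof -
        have "cnt W v' < k" using cnt_less[of v v' W] that kd wt_pos[of u'] by simp
        then show ?thesis using less.IH that by blast
      qed
      have outerI: "grp_comm G (fe u') (fe v') \<in> RR (wt u' + wt v')"
        if "basic r m u'" "basic r m v'" "(v', u') \<in> r" "wt u' + wt v' < W" for u' v'
        using outer that by blast
      show "grp_comm G (fe u) (fe v) \<in> RR W"
      proof (cases u)
        case (Gen i)
        then have "basic r m (Br u v)" using bu bv vu by simp
        then have "fe (Br u v) \<in> Bs W" using fe_Bs Wd by fastforce
        then show ?thesis using Bs_RR by auto
      next
        case (Br u1 u2)
        have bu1: "basic r m u1" and bu2: "basic r m u2" and u21: "(u2, u1) \<in> r"
          using bu Br by auto
        show ?thesis
        proof (cases "u2 = v \<or> (u2, v) \<in> r")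
          case True
          then have "basic r m (Br u v)" using bu bv vu Br by simp
          then have "fe (Br u v) \<in> Bs W" using fe_Bs Wd by fastforce
          then show ?thesis using Bs_RR by auto
        next
          case False
          then have vu2: "(v, u2) \<in> r" using r_total by blast
          have vu1: "(v, u1) \<in> r" using vu2 u21 r_trans by blast
          define a where "a = fe u1"
          define b where "b = fe u2"
          define c where "c = fe v"
          have ac: "a \<in> carrier G" "b \<in> carrier G" "c \<in> carrier G"
            using a_def b_def c_def fe_carrier bu1 bu2 bv by auto
          have al: "a \<in> lcs G (wt u1)" and bl: "b \<in> lcs G (wt u2)" using a_def b_def fe_lcs bu1 bu2 by auto
          have Wsum: "W = wt u1 + wt u2 + wt v" using Wd Br by simp
          have wu21: "wt u2 \<le> wt u1" using r_wt_le[OF u21] .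
          have C: "grp_comm G (grp_comm G c (inv a)) (inv b) \<in> RR W"
          proof -
            let ?W1 = "wt u1 + wt v"
            have W1lt: "?W1 < W" using Wsum wt_pos[of u2] by simp
            have W11: "?W1 \<ge> 1" using wt_pos[of v] by simp
            have ca: "grp_comm G c a \<in> RR ?W1"
            proof -
              have "grp_comm G a c \<in> RR ?W1" using outerI[OF bu1 bv vu1 W1lt] a_def c_def by simp
              then have "inv (grp_comm G a c) \<in> RR ?W1" using subgroup.m_inv_closed[OF RR_sub[OF W11]] by blast
              then show ?thesis using comm_inv ac by simp
            qed
            have g: "grp_comm G c (inv a) \<in> RR ?W1"
              by (rule comm_gen_right_n[OF RR_normal[OF W11], of "{a}"]) (use ac ca in \<open>auto intro: generate.inv\<close>)
            have cb: "grp_comm G (grp_comm G c (inv a)) b \<in> RR W"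
              unfolding RR_def[of ?W1] 
            proof (rule comm_gen_left_n[OF RRn RR_S_carrier ac(2)])
              show "grp_comm G c (inv a) \<in> generate G (Bs ?W1 \<union> lcs G (Suc ?W1))" using g unfolding RR_def .
            next
              fix s assume s: "s \<in> Bs ?W1 \<union> lcs G (Suc ?W1)"
              show "grp_comm G s b \<in> RR W"
              proof (cases "s \<in> lcs G (Suc ?W1)")
                case True
                then show ?thesis using lcs_comm_RR[of "Suc ?W1" "wt u2" s b W] bl wt_pos[of u2] Wsum by simp
              next
                case False
                then obtain w where w: "basic r m w" "wt w = ?W1" "s = fe w" using s unfolding Bs_def by auto
                have "(u2, w) \<in> r" using r_wt w wu21 wt_pos[of v] by simp
                then show ?thesis using inner[OF w(1) bu2 _ _ vu2] w Wsum b_def by simp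
              qed
            qed
            show ?thesis
              by (rule comm_gen_right_n[OF RRn, of "{b}"]) (use ac cb in \<open>auto intro: generate.inv\<close>)
          qed
          have B: "grp_comm G (grp_comm G (inv b) (inv c)) a \<in> RR W"
          proof -
            let ?W2 = "wt u2 + wt v"
            have W2lt: "?W2 < W" using Wsum wt_pos[of u1] by simp
            have W21: "?W2 \<ge> 1" using wt_pos[of v] by simp
            have bc: "grp_comm G b c \<in> RR ?W2" using outerI[OF bu2 bv vu2 W2lt] b_def c_def by simp
            have bic: "grp_comm G b (inv c) \<in> RR ?W2"
              by (rule comm_gen_right_n[OF RR_normal[OF W21], of "{c}"]) (use ac bc in \<open>auto intro: generate.inv\<close>)
            have g: "grp_comm G (inv b) (inv c) \<in> RR ?W2"
              by (rule comm_gen_left_n[OF RR_normal[OF W21], of "{b}"]) (use ac bic in \<open>auto intro: generate.inv\<close>)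
            show ?thesis
              unfolding RR_def[of ?W2] 
            proof (rule comm_gen_left_n[OF RRn RR_S_carrier ac(1)])
              show "grp_comm G (inv b) (inv c) \<in> generate G (Bs ?W2 \<union> lcs G (Suc ?W2))" using g unfolding RR_def .
            next
              fix s assume s: "s \<in> Bs ?W2 \<union> lcs G (Suc ?W2)"
              show "grp_comm G s a \<in> RR W"
              proof (cases "s \<in> lcs G (Suc ?W2)")
                case True
                then show ?thesis using lcs_comm_RR[of "Suc ?W2" "wt u1" s a W] al wt_pos[of u1] Wsum by simp
              next
                case False
                then obtain w where w: "basic r m w" "wt w = ?W2" "s = fe w" using s unfolding Bs_def by auto
                have sc: "s \<in> carrier G" using w fe_carrier by simp
                show ?thesis
                proof (cases "w = u1")
                  case True
                  then show ?thesis using comm_self[OF ac(1)] w a_def subgroup.one_closed[OF RR_sub[OF W1]] by simp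
                next
                  case False
                  then consider "(u1, w) \<in> r" | "(w, u1) \<in> r" using r_total by blast
                  then show ?thesis
                  proof cases
                    case 1
                    then show ?thesis using inner[OF w(1) bu1 1 _ vu1] w Wsum a_def by simp
                  next
                    case 2
                    have "(v, w) \<in> r" using r_wt w wt_pos[of u2] by simp
                    then have "grp_comm G a s \<in> RR W" using inner[OF bu1 w(1) 2 _ ] w Wsum a_def by simp
                    then have "inv (grp_comm G a s) \<in> RR W" using subgroup.m_inv_closed[OF RR_sub[OF W1]] by blast
                    then show ?thesis using comm_inv ac sc by simp
                  qed
                qed
              qed
            qed
          qed
          have "grp_comm G (grp_comm G a (inv (inv b))) c \<in> RR W"
            by (rule hw_normal[OF RRn ac(1) _ ac(3)]) (use ac B C in auto)
          then show ?thesis using Br ac a_def b_def c_def by simp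
        qed
      qed
    qed
  qed
  then show ?case by blast
qed

lemma comm_basic:
  assumes "basic r m u" "basic r m v"
  shows "grp_comm G (fe u) (fe v) \<in> RR (wt u + wt v)"
proof -
  have W1: "wt u + wt v \<ge> 1" using wt_pos[of u] by simp
  consider "u = v" | "(v, u) \<in> r" | "(u, v) \<in> r" using r_total by blast
  then show ?thesis
  proof cases
    case 1 then show ?thesis using comm_self fe_carrier assms subgroup.one_closed[OF RR_sub[OF W1]] by simp
  next
    case 2 then show ?thesis using core assms by blast
  next
    case 3
    then have "grp_comm G (fe v) (fe u) \<in> RR (wt u + wt v)" using core assms by (metis add.commute)
    then have "inv (grp_comm G (fe v) (fe u)) \<in> RR (wt u + wt v)" using subgroup.m_inv_closed[OF RR_sub[OF W1]] by blast
    then show ?thesis using comm_inv fe_carrier assms by simp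
  qed
qed

end



context hall begin

lemma lcs_RR_all: "w \<ge> 1 \<Longrightarrow> lcs G w \<subseteq> RR w"
proof (induction w rule: nat_induct_at_least)
  case base
  have "x ` {..<m} \<subseteq> RR 1"
  proof
    fix y assume "y \<in> x ` {..<m}"
    then obtain i where i: "i < m" "y = x i" by blast
    then have "y = fe (Gen i)" "basic r m (Gen i)" by auto
    then have "y \<in> Bs 1" using fe_Bs by fastforce
    then show "y \<in> RR 1" using Bs_RR by blast
  qed
  then have "generate G (x ` {..<m}) \<subseteq> RR 1" using generate_subgroup_incl RR_sub by simp
  then show ?case using gen by simp
next
  case (Suc w)
  have Sw: "Suc w \<ge> 1" by simp
  show ?case unfolding lcs_Suc[OF Suc.hyps]
  proof (rule comm_subgroup_le[OF RR_sub[OF Sw]])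
    fix g h assume g: "g \<in> lcs G w" and h: "h \<in> carrier G"
    have "g \<in> generate G (Bs w \<union> lcs G (Suc w))" using g Suc.IH unfolding RR_def by blast
    then show "grp_comm G g h \<in> RR (Suc w)"
    proof (rule comm_gen_left_n[OF RR_normal[OF Sw] RR_S_carrier h, rotated])
      fix s assume s: "s \<in> Bs w \<union> lcs G (Suc w)"
      show "grp_comm G s h \<in> RR (Suc w)"
      proof (cases "s \<in> lcs G (Suc w)")
        case True
        then have "grp_comm G s h \<in> lcs G (Suc (Suc w))" using lcs_comm_carrier[of "Suc w" s h] h by auto
        then show ?thesis using lcs_RR by blast
      next
        case False
        then obtain t where t: "basic r m t" "wt t = w" "s = fe t" using s unfolding Bs_def by auto
        have hg: "h \<in> generate G (x ` {..<m})" using h gen by simp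
        show ?thesis
        proof (rule comm_gen_right_n[OF RR_normal[OF Sw] xc _ _ hg])
          show "s \<in> carrier G" using t fe_carrier by simp
        next
          fix y assume "y \<in> x ` {..<m}"
          then obtain i where i: "i < m" "y = x i" by blast
          then show "grp_comm G s y \<in> RR (Suc w)" using comm_basic[OF t(1), of "Gen i"] t by simp
        qed
      qed
    qed
  qed
qed

lemma assemble:
  assumes "a \<ge> 1" "a \<le> j"
  shows "lcs G a \<subseteq> generate G (fe ` {t. basic r m t \<and> a \<le> wt t \<and> wt t < j} \<union> lcs G j)"
  using assms(2)
proof (induction j rule: nat_induct_at_least)
  case base
  then show ?case by (blast intro: generate.incl)
next
  case (Suc j)
  let ?S = "fe ` {t. basic r m t \<and> a \<le> wt t \<and> wt t < Suc j} \<union> lcs G (Suc j)"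
  have Sc: "?S \<subseteq> carrier G" using fe_carrier lcs_carrier by blast
  have j1: "j \<ge> 1" using Suc.hyps assms by simp
  have "fe ` {t. basic r m t \<and> a \<le> wt t \<and> wt t < j} \<union> lcs G j \<subseteq> generate G ?S"
  proof -
    have "fe ` {t. basic r m t \<and> a \<le> wt t \<and> wt t < j} \<subseteq> generate G ?S"
      by (auto intro!: generate.incl)
    moreover have "lcs G j \<subseteq> generate G ?S"
    proof -
      have "Bs j \<union> lcs G (Suc j) \<subseteq> ?S" unfolding Bs_def using Suc.hyps by auto
      then have "RR j \<subseteq> generate G ?S" unfolding RR_def by (rule mono_generate)
      then show ?thesis using lcs_RR_all[OF j1] by blast
    qed
    ultimately show ?thesis by blast
  qed
  then have "generate G (fe ` {t. basic r m t \<and> a \<le> wt t \<and> wt t < j} \<union> lcs G j) \<subseteq> generate G ?S"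
    using generate_subgroup_incl generate_is_subgroup[OF Sc] by blast
  then show ?case using Suc.IH by blast
qed

end



lemma (in group) mult_normal_subgroup:
  assumes H: "subgroup H G" and N: "N \<lhd> G"
  shows "subgroup (H <#> N) G"
proof -
  have Hc: "H \<subseteq> carrier G" using H subgroup.subset by blast
  have Nc: "N \<subseteq> carrier G" using N normal_imp_subgroup subgroup.subset by blast
  note Ns = normal_imp_subgroup[OF N]
  have mem: "z \<in> H <#> N \<longleftrightarrow> (\<exists>h\<in>H. \<exists>k\<in>N. z = h \<otimes> k)" for z
    unfolding set_mult_def by blast
  show ?thesis
  proof (rule subgroupI)
    show "H <#> N \<subseteq> carrier G" using Hc Nc unfolding set_mult_def by blast
    show "H <#> N \<noteq> {}" using mem subgroup.one_closed[OF H] subgroup.one_closed[OF Ns] by blast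
  next
    fix z assume "z \<in> H <#> N"
    then obtain h k where hk: "h \<in> H" "k \<in> N" "z = h \<otimes> k" using mem by blast
    have c: "h \<in> carrier G" "k \<in> carrier G" using hk Hc Nc by auto
    have "h \<otimes> inv k \<otimes> inv h \<in> N" using N normal_inv_iff c hk subgroup.m_inv_closed[OF Ns] by blast
    moreover have "inv h \<in> H" using hk subgroup.m_inv_closed[OF H] by blast
    moreover have "inv z = inv h \<otimes> (h \<otimes> inv k \<otimes> inv h)" using hk c by (simp add: inv_mult_group m_assoc)
    ultimately show "inv z \<in> H <#> N" using mem by blast
  next
    fix z1 z2 assume "z1 \<in> H <#> N" "z2 \<in> H <#> N"
    then obtain h1 k1 h2 k2 where hk: "h1 \<in> H" "k1 \<in> N" "z1 = h1 \<otimes> k1" "h2 \<in> H" "k2 \<in> N" "z2 = h2 \<otimes> k2"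
      using mem by meson
    have c: "h1 \<in> carrier G" "k1 \<in> carrier G" "h2 \<in> carrier G" "k2 \<in> carrier G" using hk Hc Nc by auto
    have "inv h2 \<otimes> k1 \<otimes> h2 \<in> N" using normal_conj[OF N] c hk by blast
    then have "(inv h2 \<otimes> k1 \<otimes> h2) \<otimes> k2 \<in> N" using hk subgroup.m_closed[OF Ns] by blast
    moreover have "h1 \<otimes> h2 \<in> H" using hk subgroup.m_closed[OF H] by blast
    moreover have "z1 \<otimes> z2 = (h1 \<otimes> h2) \<otimes> ((inv h2 \<otimes> k1 \<otimes> h2) \<otimes> k2)" using hk c by (simp add: m_assoc)
    ultimately show "z1 \<otimes> z2 \<in> H <#> N" using mem by blast
  qed
qed

lemma (in hall) main:
  fixes n c :: nat and Y Z
  assumes "n \<ge> 1" and "c \<ge> 1" and "c \<ge> n - 1"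
  assumes Y_def: "Y = {t. basic r m t \<and> c + 1 \<le> wt t \<and> wt t \<le> c + n}"
  assumes Z_def: "Z = {grp_comm G (feval G x b) (feval G x a) | a b. a \<in> Y \<and> b \<in> Y \<and> (a, b) \<in> r}"
  shows "comm_subgroup G (lcs G (c + 1)) (lcs G (c + 1)) =
         generate G Z <#> comm_subgroup G (lcs G (c + n + 1)) (lcs G (c + 1))"
proof -
  define K where "K = c + n + 1"
  define D where "D = comm_subgroup G (lcs G (c + 1)) (lcs G (c + 1))"
  define N where "N = comm_subgroup G (lcs G K) (lcs G (c + 1))"
  define M where "M = generate G Z <#> N"
  have c1: "c + 1 \<ge> 1" by simp
  have KD: "K \<le> 2 * c + 2" using assms(1-3) K_def by simp
  have Ksub: "lcs G K \<subseteq> lcs G (c + 1)" unfolding K_def by (rule lcs_antimono) simp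
  have Dsub: "subgroup D G" unfolding D_def using comm_subgroup_sub lcs_carrier by blast
  have Nnorm: "N \<lhd> G" unfolding N_def using comm_subgroup_normal lcs_normal by blast
  note Nsub = normal_imp_subgroup[OF Nnorm]
  have Yfe: "fe y \<in> lcs G (c + 1)" if "y \<in> Y" for y
  proof -
    have y: "basic r m y" "c + 1 \<le> wt y" using that unfolding Y_def by auto
    have "lcs G (wt y) \<subseteq> lcs G (c + 1)" by (rule lcs_antimono) (rule y(2))
    then show ?thesis using fe_lcs[OF y(1)] by blast
  qed
  have Yc: "fe y \<in> carrier G" if "y \<in> Y" for y using that fe_carrier unfolding Y_def by blast
  have ZD: "Z \<subseteq> D" unfolding Z_def D_def using Yfe comm_subgroup_mem by blast
  have Zc: "Z \<subseteq> carrier G" using ZD Dsub subgroup.subset by blast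
  have genZ: "subgroup (generate G Z) G" using generate_is_subgroup[OF Zc] .
  have genZD: "generate G Z \<subseteq> D" using generate_subgroup_incl[OF ZD Dsub] .
  have DK: "D \<subseteq> lcs G K"
    unfolding D_def
  proof (rule comm_subgroup_le[OF lcs_sub])
    fix g h assume gh: "g \<in> lcs G (c + 1)" "h \<in> lcs G (c + 1)"
    have "grp_comm G g h \<in> lcs G (c + 1 + (c + 1))" by (rule lcs_comm[OF c1 c1 gh])
    moreover have "lcs G (c + 1 + (c + 1)) \<subseteq> lcs G K" by (rule lcs_antimono) (use KD in arith)
    ultimately show "grp_comm G g h \<in> lcs G K" by blast
  qed
  have ND: "N \<subseteq> D" unfolding N_def
    by (rule comm_subgroup_le[OF Dsub]) (use Ksub in \<open>auto simp: D_def intro: comm_subgroup_mem\<close>)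
  have Msub: "subgroup M G" unfolding M_def by (rule mult_normal_subgroup[OF genZ Nnorm])
  have memM: "z \<in> M \<longleftrightarrow> (\<exists>h\<in>generate G Z. \<exists>k\<in>N. z = h \<otimes> k)" for z
    unfolding M_def set_mult_def by blast
  have NM: "N \<subseteq> M"
  proof
    fix k assume k: "k \<in> N"
    then have "k = \<one> \<otimes> k" using Nsub subgroup.subset l_one by (metis subsetD)
    moreover have "\<one> \<in> generate G Z" by (rule generate.one)
    ultimately show "k \<in> M" unfolding memM using k by blast
  qed
  have ZM: "Z \<subseteq> M"
  proof
    fix z assume z: "z \<in> Z"
    then have "z = z \<otimes> \<one>" using Zc r_one by (metis subsetD)
    moreover have "z \<in> generate G Z" by (rule generate.incl[OF z])
    moreover have "\<one> \<in> N" by (rule subgroup.one_closed[OF Nsub])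
    ultimately show "z \<in> M" unfolding memM by blast
  qed
  have MD: "M \<subseteq> D"
  proof
    fix z assume "z \<in> M"
    then obtain h k where "h \<in> generate G Z" "k \<in> N" "z = h \<otimes> k" using memM by blast
    then show "z \<in> D" using genZD ND subgroup.m_closed[OF Dsub] by blast
  qed
  have Mconj: "inv k \<otimes> a \<otimes> k \<in> M" if k: "k \<in> lcs G (c + 1)" and a: "a \<in> M" for k a
  proof -
    have ac: "a \<in> carrier G" "k \<in> carrier G" using a k MD Dsub subgroup.subset lcs_carrier by blast+
    have "grp_comm G a k \<in> N" unfolding N_def using a MD DK k comm_subgroup_mem by blast
    then have "a \<otimes> grp_comm G a k \<in> M" using NM a subgroup.m_closed[OF Msub] by blast
    then show ?thesis using conj_comm ac by simp
  qed
  have Yeq: "fe ` {t. basic r m t \<and> c + 1 \<le> wt t \<and> wt t < K} = fe ` Y"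
    unfolding Y_def K_def by (rule arg_cong[where f="image fe"]) auto
  have P: "lcs G (c + 1) \<subseteq> generate G (fe ` Y \<union> lcs G K)"
    using assemble[of "c + 1" K] K_def Yeq by simp
  let ?S = "fe ` Y \<union> lcs G K"
  have SC: "?S \<subseteq> lcs G (c + 1)" using Yfe Ksub by blast
  have DM: "D \<subseteq> M"
    unfolding D_def
  proof (rule comm_subgroup_le[OF Msub])
    fix g h assume g: "g \<in> lcs G (c + 1)" and h: "h \<in> lcs G (c + 1)"
    have hc: "h \<in> carrier G" using h lcs_carrier by blast
    show "grp_comm G g h \<in> M"
    proof (rule comm_gen_left[OF Msub lcs_sub SC hc Mconj])
      show "g \<in> generate G ?S" using g P by blast
    next
      fix s assume s: "s \<in> ?S"
      show "grp_comm G s h \<in> M"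
      proof (cases "s \<in> lcs G K")
        case True
        then show ?thesis using h NM comm_subgroup_mem unfolding N_def by blast
      next
        case False
        then obtain y where y: "y \<in> Y" "s = fe y" using s by blast
        show ?thesis
        proof (rule comm_gen_right[OF Msub lcs_sub SC _ Mconj])
          show "s \<in> carrier G" using y Yc by simp
          show "h \<in> generate G ?S" using h P by blast
        next
          fix s' assume s': "s' \<in> ?S"
          show "grp_comm G s s' \<in> M"
          proof (cases "s' \<in> lcs G K")
            case True
            have "grp_comm G s' s \<in> N" unfolding N_def using True y Yfe comm_subgroup_mem by blast
            then have "inv (grp_comm G s' s) \<in> M" using NM subgroup.m_inv_closed[OF Msub] by blast
            moreover have "s' \<in> carrier G" using True lcs_carrier by blast
            ultimately show ?thesis using comm_inv[of s' s] y Yc by simp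
          next
            case False
            then obtain y' where y': "y' \<in> Y" "s' = fe y'" using s' by blast
            consider "y = y'" | "(y', y) \<in> r" | "(y, y') \<in> r" using r_total by blast
            then show ?thesis
            proof cases
              case 1 then show ?thesis using comm_self Yc y y' subgroup.one_closed[OF Msub] by simp
            next
              case 2 then have "grp_comm G s s' \<in> Z" unfolding Z_def using y y' by blast
              then show ?thesis using ZM by blast
            next
              case 3 then have "grp_comm G s' s \<in> Z" unfolding Z_def using y y' by blast
              then have "inv (grp_comm G s' s) \<in> M" using ZM subgroup.m_inv_closed[OF Msub] by blast
              then show ?thesis using comm_inv y y' Yc by auto
            qed
          qed
        qed
      qed
    qed
  qed
  show ?thesis using DM MD unfolding D_def M_def N_def K_def by blast
qed


theorem lemma2p3:
  fixes G :: "('a, 'b) monoid_scheme" and x :: "nat \<Rightarrow> 'a"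
    and m n c :: nat and r :: "(fcomm \<times> fcomm) set"
  assumes "group G"
    and "free_on G m x"
    and "admissible_order r"
    and "n \<ge> 1" and "c \<ge> 1" and "c \<ge> n - 1"
  defines "Y \<equiv> {t. basic r m t \<and> c + 1 \<le> wt t \<and> wt t \<le> c + n}"
  defines "Z \<equiv> {grp_comm G (feval G x b) (feval G x a) | a b. a \<in> Y \<and> b \<in> Y \<and> (a, b) \<in> r}"
  shows "comm_subgroup G (lcs G (c + 1)) (lcs G (c + 1)) =
         generate G Z <#>\<^bsub>G\<^esub> comm_subgroup G (lcs G (c + n + 1)) (lcs G (c + 1))"
proof -
  interpret hall G x m r
    using assms(1-3) unfolding free_on_def hall_def hall_axioms_def by blast
  show ?thesis using main[OF assms(4-6) Y_def[THEN meta_eq_to_obj_eq] Z_def[THEN meta_eq_to_obj_eq]] .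
qed



end
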